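(* Let $\Sigma$ be a finite alphabet, let $y^* = y^*_1 \cdots y^*_n \in \Sigma^*$, let $p \in \Sigma^*$, and let $m(p) = \min_{0 \le j \le n} D(p, y^*_{1..j})$. For a symbol $a \in \Sigma$ define the optimal Q-value $$Q^*(p, a) \;=\; \max_{s \in \Sigma^*} \bigl(-D(p\,a\,s,\; y^* )\bigr).$$ Then $$Q^*(p,a) \;=\; \begin{cases} -m(p) & \text{if there exists } j \in \{0,\dots,n-1\} \text{ with } D(p, y^*_{1..j}) = m(p) \text{ and } y^*_{j+1} = a,\\[2pt] -m(p) - 1 & \text{otherwise.}\end{cases}$$ Furthermore, terminating immediately (i.e. choosing the empty suffix, giving value $-D(p,y^* )$) attains the value $-m(p)$ if and only if $D(p, y^* ) = m(p)$, and otherwise has value at most $-m(p)-1$.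
   Context: $D(u,v)$ denotes the Levenshtein edit distance between finite strings $u,v$: the minimum number of single-symbol insertions, deletions and substitutions needed to transform $u$ into $v$. For a string $y^*$ of length $n$, $y^*_{1..j}$ denotes its prefix of length $j$ ($y^*_{1..0}$ is the empty string). Juxtaposition $p\,a\,s$ denotes concatenation of the string $p$, the single symbol $a$, and the string $s$. *)

theory Defs
  imports Main
begin

definition edit1 :: "'a list \<Rightarrow> 'a list \<Rightarrow> bool" where
  "edit1 u v \<longleftrightarrow>
     (\<exists>p s b. u = p @ s \<and> v = p @ b # s) \<or>
     (\<exists>p s b. u = p @ b # s \<and> v = p @ s) \<or>
     (\<exists>p s b c. u = p @ b # s \<and> v = p @ c # s)"

definition lev :: "'a list \<Rightarrow> 'a list \<Rightarrow> nat" where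
  "lev u v = (LEAST k. (edit1 ^^ k) u v)"

definition mval :: "'a list \<Rightarrow> 'a list \<Rightarrow> nat" where
  "mval p ystar = Min {lev p (take j ystar) | j. j \<le> length ystar}"

definition Qstar :: "'a set \<Rightarrow> 'a list \<Rightarrow> 'a list \<Rightarrow> 'a \<Rightarrow> int" where
  "Qstar \<Sigma> ystar p a = (GREATEST q. \<exists>s \<in> lists \<Sigma>. q = - int (lev (p @ a # s) ystar))"

end

theory Submission
  imports Defs
begin

fun ed :: "'a list \<Rightarrow> 'a list \<Rightarrow> nat" where
  "ed [] w = length w"
| "ed (x#u) [] = Suc (length u)"
| "ed (x#u) (y#w) = min (min (ed u w + (if x = y then 0 else 1)) (ed u (y#w) + 1)) (ed (x#u) w + 1)"

lemma L1: "ed u (y#w) \<le> Suc (ed u w)"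
  by (induction u) auto

lemma L2: "ed (b#s) w \<le> Suc (ed s w)"
  by (cases w; cases s) auto

lemma L3: "ed s w \<le> Suc (ed (b#s) w)"
proof (induction w)
  case Nil then show ?case by (cases s) auto
next
  case (Cons y w)
  have "ed s (y#w) \<le> Suc (ed s w)" by (rule L1)
  then show ?case using Cons by auto
qed

lemma L4: "ed (b#s) w \<le> Suc (ed (c#s) w)"
  by (induction w) auto

lemma L5: assumes "\<And>w. ed u w \<le> Suc (ed v w)" shows "ed (x#u) w \<le> Suc (ed (x#v) w)"
proof (induction w)
  case Nil
  have "ed u [] \<le> Suc (ed v [])" by (rule assms)
  then show ?case by (cases u; cases v) auto
next
  case (Cons y w)
  have "ed u w \<le> Suc (ed v w)" "ed u (y#w) \<le> Suc (ed v (y#w))" by (rule assms)+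
  then show ?case using Cons by auto
qed

lemma L6: assumes "edit1 u v" shows "ed u w \<le> Suc (ed v w)"
proof -
  have ins: "ed (p@s) w \<le> Suc (ed (p@b#s) w)" for p s b and w :: "'a list"
    by (induction p arbitrary: w) (simp_all add: L3 L5)
  have del: "ed (p@b#s) w \<le> Suc (ed (p@s) w)" for p s b and w :: "'a list"
    by (induction p arbitrary: w) (simp_all add: L2 L5)
  have sub: "ed (p@b#s) w \<le> Suc (ed (p@c#s) w)" for p s b c and w :: "'a list"
    by (induction p arbitrary: w) (simp_all add: L4 L5)
  show ?thesis using assms unfolding edit1_def using ins del sub by blast
qed

lemma L7: "ed v v = 0"
  by (induction v) auto

lemma L8: "(edit1 ^^ k) u v \<Longrightarrow> ed u v \<le> k"
proof (induction k arbitrary: u)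
  case 0 then show ?case by (simp add: L7)
next
  case (Suc k)
  then obtain w where "edit1 u w" "(edit1 ^^ k) w v" by (blast elim: relpowp_Suc_E2)
  with Suc.IH L6[of u w v] show ?case by fastforce
qed

lemma ctx1: "edit1 u v \<Longrightarrow> edit1 (c@u@d) (c@v@d)"
  unfolding edit1_def
  by (elim disjE exE conjE; simp) (metis append.assoc append_Cons)+

lemma ctx: "(edit1 ^^ k) u v \<Longrightarrow> (edit1 ^^ k) (c@u@d) (c@v@d)"
proof (induction k arbitrary: v)
  case 0 then show ?case by simp
next
  case (Suc k)
  then obtain w where "(edit1 ^^ k) u w" "edit1 w v" by (blast elim: relpowp_Suc_E)
  then show ?case using Suc.IH ctx1 by (blast intro: relpowp_Suc_I)
qed

lemma L9: "\<exists>k. (edit1 ^^ k) u v \<and> k \<le> ed u v"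
proof (induction u v rule: ed.induct)
  case (1 w)
  have "(edit1 ^^ length w) [] w"
  proof (induction w)
    case Nil then show ?case by simp
  next
    case (Cons y w)
    have "edit1 w (y#w)" unfolding edit1_def by (metis append_Nil)
    with Cons show ?case by (metis length_Cons relpowp_Suc_I)
  qed
  then show ?case by auto
next
  case (2 x u)
  have "(edit1 ^^ length u) u []"
  proof (induction u)
    case Nil then show ?case by simp
  next
    case (Cons y w)
    have "edit1 (y#w) w" unfolding edit1_def by (metis append_Nil)
    with Cons show ?case by (metis length_Cons relpowp_Suc_I2)
  qed
  moreover have "edit1 (x#u) u" unfolding edit1_def by (metis append_Nil)
  ultimately have "(edit1 ^^ Suc (length u)) (x#u) []" by (blast intro: relpowp_Suc_I2)
  then show ?case by (intro exI[of _ "Suc (length u)"]) simp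
next
  case (3 x u y w)
  obtain k1 where k1: "(edit1 ^^ k1) u w" "k1 \<le> ed u w" using 3(1) by blast
  obtain k2 where k2: "(edit1 ^^ k2) u (y#w)" "k2 \<le> ed u (y#w)" using 3(2) by blast
  obtain k3 where k3: "(edit1 ^^ k3) (x#u) w" "k3 \<le> ed (x#u) w" using 3(3) by blast
  have c1: "\<exists>k. (edit1 ^^ k) (x#u) (y#v) \<and> k \<le> ed u w + (if x = y then 0 else 1)"
    if "v = w" for v
  proof -
    have a: "(edit1 ^^ k1) (x#u) (x#w)" using ctx[OF k1(1), of "[x]" "[]"] by simp
    show ?thesis
    proof (cases "x = y")
      case True then show ?thesis using a k1 that by auto
    next
      case False
      have "edit1 (x#w) (y#w)" unfolding edit1_def by (metis append_Nil)
      with a have "(edit1 ^^ Suc k1) (x#u) (y#w)" by (rule relpowp_Suc_I)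
      then show ?thesis using False k1 that by (intro exI[of _ "Suc k1"]) auto
    qed
  qed
  have c2: "\<exists>k. (edit1 ^^ k) (x#u) (y#w) \<and> k \<le> ed u (y#w) + 1"
  proof -
    have "edit1 (x#u) u" unfolding edit1_def by (metis append_Nil)
    with k2 have "(edit1 ^^ Suc k2) (x#u) (y#w)" by (blast intro: relpowp_Suc_I2)
    then show ?thesis using k2 by (intro exI[of _ "Suc k2"]) auto
  qed
  have c3: "\<exists>k. (edit1 ^^ k) (x#u) (y#w) \<and> k \<le> ed (x#u) w + 1"
  proof -
    have "edit1 w (y#w)" unfolding edit1_def by (metis append_Nil)
    with k3 have "(edit1 ^^ Suc k3) (x#u) (y#w)" by (blast intro: relpowp_Suc_I)
    then show ?thesis using k3 by (intro exI[of _ "Suc k3"]) auto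
  qed
  show ?case using c1[OF refl] c2 c3 by (simp add: min_def)
qed

lemma lev_ed: "lev u v = ed u v"
proof -
  obtain k where k: "(edit1 ^^ k) u v" "k \<le> ed u v" using L9 by blast
  have "lev u v \<le> k" unfolding lev_def using k(1) by (rule Least_le)
  moreover have "(edit1 ^^ lev u v) u v" unfolding lev_def using k(1) by (rule LeastI)
  ultimately show ?thesis using L8 k(2) by (meson le_antisym le_trans)
qed

lemma concat: "ed (u1@u2) (w1@w2) \<le> ed u1 w1 + ed u2 w2"
proof -
  obtain k1 where k1: "(edit1 ^^ k1) u1 w1" "k1 \<le> ed u1 w1" using L9 by blast
  obtain k2 where k2: "(edit1 ^^ k2) u2 w2" "k2 \<le> ed u2 w2" using L9 by blast
  have a: "(edit1 ^^ k1) (u1@u2) (w1@u2)" using ctx[OF k1(1), of "[]" u2] by simp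
  have b: "(edit1 ^^ k2) (w1@u2) (w1@w2)" using ctx[OF k2(1), of w1 "[]"] by simp
  have "(edit1 ^^ (k1+k2)) (u1@u2) (w1@w2)" unfolding relpowp_add using a b by blast
  then show ?thesis using L8 k1 k2 by (meson add_mono le_trans)
qed

lemma rev1: assumes "edit1 u v" shows "edit1 (rev u) (rev v)"
proof -
  from assms[unfolded edit1_def] consider
     (i) p s b where "u = p@s" "v = p@b#s"
   | (d) p s b where "u = p@b#s" "v = p@s"
   | (c) p s b c where "u = p@b#s" "v = p@c#s" by blast
  then show ?thesis
  proof cases
    case i then show ?thesis unfolding edit1_def
      by (intro disjI1 exI[of _ "rev s"] exI[of _ "rev p"] exI[of _ b]) simp
  next
    case d then show ?thesis unfolding edit1_def
      by (intro disjI2 disjI1 exI[of _ "rev s"] exI[of _ "rev p"] exI[of _ b]) simp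
  next
    case c then show ?thesis unfolding edit1_def
      by (intro disjI2 exI[of _ "rev s"] exI[of _ "rev p"] exI[of _ b] exI[of _ c]) simp
  qed
qed

lemma revk: "(edit1 ^^ k) u v \<Longrightarrow> (edit1 ^^ k) (rev u) (rev v)"
proof (induction k arbitrary: v)
  case 0 then show ?case by simp
next
  case (Suc k)
  then obtain w where "(edit1 ^^ k) u w" "edit1 w v" by (blast elim: relpowp_Suc_E)
  then show ?case using Suc.IH rev1 by (blast intro: relpowp_Suc_I)
qed

lemma rev_le: "ed (rev u) (rev v) \<le> ed u v"
proof -
  obtain k where k: "(edit1 ^^ k) u v" "k \<le> ed u v" using L9 by blast
  show ?thesis using L8[OF revk[OF k(1)]] k(2) by simp
qed

lemma rev_ed: "ed (rev u) (rev v) = ed u v"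
  using rev_le[of u v] rev_le[of "rev u" "rev v"] by simp

lemma ed_Nil2[simp]: "ed u [] = length u"
  by (cases u) auto

lemma snoc: "ed (u@[x]) (w@[y]) = min (min (ed u w + (if x = y then 0 else 1)) (ed u (w@[y]) + 1)) (ed (u@[x]) w + 1)"
proof -
  have "ed (u@[x]) (w@[y]) = ed (x # rev u) (y # rev w)" using rev_ed[of "u@[x]" "w@[y]"] by simp
  also have "\<dots> = min (min (ed (rev u) (rev w) + (if x = y then 0 else 1)) (ed (rev u) (y # rev w) + 1)) (ed (x # rev u) (rev w) + 1)"
    by (simp only: ed.simps)
  also have "ed (rev u) (rev w) = ed u w" by (rule rev_ed)
  also have "ed (rev u) (y # rev w) = ed u (w@[y])" using rev_ed[of u "w@[y]"] by simp
  also have "ed (x # rev u) (rev w) = ed (u@[x]) w" using rev_ed[of "u@[x]" w] by simp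
  finally show ?thesis .
qed

lemma prefix_lb: "\<exists>k\<le>length w. ed u (take k w) \<le> ed (u@s) w"
proof (induction u arbitrary: w)
  case Nil
  show ?case by (intro exI[of _ 0]) simp
next
  case (Cons x u)
  note outer = Cons.IH
  show ?case
  proof (induction w)
    case Nil then show ?case by (intro exI[of _ 0]) simp
  next
    case (Cons y w)
    note inner = Cons.IH
    have t1: "\<exists>k\<le>length (y#w). ed (x#u) (take k (y#w)) \<le> ed (u@s) w + (if x = y then 0 else 1)"
    proof -
      obtain k where k: "k \<le> length w" "ed u (take k w) \<le> ed (u@s) w" using outer by blast
      have "ed (x#u) (take (Suc k) (y#w)) \<le> ed u (take k w) + (if x = y then 0 else 1)" by simp
      moreover have "Suc k \<le> length (y#w)" using k by simp
      ultimately show ?thesis using k(2) by (intro exI[of _ "Suc k"]) linarith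
    qed
    have t2: "\<exists>k\<le>length (y#w). ed (x#u) (take k (y#w)) \<le> ed (u@s) (y#w) + 1"
    proof -
      obtain k where k: "k \<le> length (y#w)" "ed u (take k (y#w)) \<le> ed (u@s) (y#w)" using outer by blast
      have "ed (x#u) (take k (y#w)) \<le> Suc (ed u (take k (y#w)))" by (rule L2)
      then have "ed (x#u) (take k (y#w)) \<le> ed (u@s) (y#w) + 1" using k(2) by linarith
      then show ?thesis using k(1) by blast
    qed
    have t3: "\<exists>k\<le>length (y#w). ed (x#u) (take k (y#w)) \<le> ed ((x#u)@s) w + 1"
    proof -
      obtain k where k: "k \<le> length w" "ed (x#u) (take k w) \<le> ed ((x#u)@s) w" using inner by blast
      have "ed (x#u) (take (Suc k) (y#w)) \<le> Suc (ed (x#u) (take k w))" using L1[of "x#u" y "take k w"] by simp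
      moreover have "Suc k \<le> length (y#w)" using k by simp
      ultimately show ?thesis using k(2) by (intro exI[of _ "Suc k"]) linarith
    qed
    have E: "ed ((x#u)@s) (y#w) = min (min (ed (u@s) w + (if x = y then 0 else 1)) (ed (u@s) (y#w) + 1)) (ed ((x#u)@s) w + 1)"
      by simp
    have "ed ((x#u)@s) (y#w) = ed (u@s) w + (if x = y then 0 else 1) \<or> ed ((x#u)@s) (y#w) = ed (u@s) (y#w) + 1 \<or> ed ((x#u)@s) (y#w) = ed ((x#u)@s) w + 1"
      unfolding E by linarith
    then show ?case using t1 t2 t3 by (elim disjE) (simp only:)+
  qed
qed

lemma snoc_lb:
  fixes p y :: "'a list" and m :: nat
  assumes hm: "\<And>j. j \<le> length y \<Longrightarrow> m \<le> ed p (take j y)"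
    and nc: "\<not> (\<exists>j < length y. ed p (take j y) = m \<and> y ! j = a)"
  shows "k \<le> length y \<Longrightarrow> m + 1 \<le> ed (p@[a]) (take k y)"
proof (induction k)
  case 0
  have "m \<le> ed p (take 0 y)" by (rule hm) simp
  then show ?case by simp
next
  case (Suc k)
  then have kl: "k < length y" by simp
  have tk: "take (Suc k) y = take k y @ [y ! k]" using kl by (rule take_Suc_conv_app_nth)
  have IH: "m + 1 \<le> ed (p@[a]) (take k y)" using Suc by simp
  have h1: "m + 1 \<le> ed p (take k y) + (if a = y ! k then 0 else 1)"
  proof (cases "a = y ! k")
    case True
    have "m \<le> ed p (take k y)" using hm kl by simp
    moreover have "ed p (take k y) \<noteq> m" using nc kl True by blast
    ultimately show ?thesis using True by simp
  next
    case False
    have "m \<le> ed p (take k y)" using hm kl by simp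
    then show ?thesis using False by simp
  qed
  have h2: "m \<le> ed p (take (Suc k) y)" using hm Suc.prems by simp
  show ?case unfolding tk snoc using h1 h2 IH tk by simp
qed

theorem mainTheorem3:
  fixes \<Sigma> :: "'a set" and ystar p :: "'a list" and a :: 'a
  assumes "finite \<Sigma>" and "ystar \<in> lists \<Sigma>" and "p \<in> lists \<Sigma>" and "a \<in> \<Sigma>"
  shows "Qstar \<Sigma> ystar p a =
           (if \<exists>j < length ystar. lev p (take j ystar) = mval p ystar \<and> ystar ! j = a
            then - int (mval p ystar) else - int (mval p ystar) - 1) \<and>
         ((- int (lev p ystar) = - int (mval p ystar)) \<longleftrightarrow> lev p ystar = mval p ystar) \<and>
         (lev p ystar \<noteq> mval p ystar \<longrightarrow> - int (lev p ystar) \<le> - int (mval p ystar) - 1)"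
proof -
  let ?n = "length ystar"
  define m where "m = mval p ystar"
  have Sset: "{lev p (take j ystar) | j. j \<le> ?n} = (\<lambda>j. ed p (take j ystar)) ` {..?n}"
    by (auto simp: lev_ed)
  have mdef: "m = Min ((\<lambda>j. ed p (take j ystar)) ` {..?n})"
    unfolding m_def mval_def Sset ..
  have hm1: "m \<le> ed p (take j ystar)" if "j \<le> ?n" for j
    unfolding mdef using that by (intro Min_le) auto
  have "m \<in> (\<lambda>j. ed p (take j ystar)) ` {..?n}"
    unfolding mdef by (intro Min_in) auto
  then obtain j0 where j0: "j0 \<le> ?n" "ed p (take j0 ystar) = m" by auto
  have low: "m \<le> ed (p@a#s) ystar" for s
  proof -
    obtain k where "k \<le> ?n" "ed p (take k ystar) \<le> ed (p@(a#s)) ystar" using prefix_lb by blast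
    then show ?thesis using hm1 by (meson le_trans)
  qed
  define C where "C = (\<exists>j < ?n. ed p (take j ystar) = m \<and> ystar ! j = a)"
  have low2: "m + 1 \<le> ed (p@a#s) ystar" if "\<not> C" for s
  proof -
    obtain k where k: "k \<le> ?n" "ed (p@[a]) (take k ystar) \<le> ed ((p@[a])@s) ystar"
      using prefix_lb by blast
    have "m + 1 \<le> ed (p@[a]) (take k ystar)"
      using snoc_lb[of ystar m p a k] hm1 that k(1) unfolding C_def by blast
    then show ?thesis using k(2) by simp
  qed
  have split: "ed (p@a#s) ystar \<le> ed p (take j ystar) + ed (a#s) (drop j ystar)" for j s
    using concat[of p "a#s" "take j ystar" "drop j ystar"] by simp
  have dl: "drop j ystar \<in> lists \<Sigma>" for j
    using assms(2) by (meson in_lists_conv_set in_set_dropD)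
  have up1: "\<exists>s\<in>lists \<Sigma>. ed (p@a#s) ystar \<le> m" if C
  proof -
    obtain j where j: "j < ?n" "ed p (take j ystar) = m" "ystar ! j = a" using \<open>C\<close> unfolding C_def by blast
    have "drop j ystar = a # drop (Suc j) ystar" using j by (metis Cons_nth_drop_Suc)
    then have "ed (p@a#drop (Suc j) ystar) ystar \<le> m" using split[of "drop (Suc j) ystar" j] j by (simp add: L7)
    then show ?thesis using dl by blast
  qed
  have up2: "\<exists>s\<in>lists \<Sigma>. ed (p@a#s) ystar \<le> m + 1"
  proof (cases "j0 < ?n")
    case True
    have d: "drop j0 ystar = ystar ! j0 # drop (Suc j0) ystar" using True by (metis Cons_nth_drop_Suc)
    have "ed (a # drop (Suc j0) ystar) (ystar ! j0 # drop (Suc j0) ystar) \<le> ed (drop (Suc j0) ystar) (drop (Suc j0) ystar) + 1"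
      by (simp only: ed.simps(3)) (simp add: min_le_iff_disj)
    then have "ed (a # drop (Suc j0) ystar) (drop j0 ystar) \<le> 1" unfolding d by (simp add: L7)
    then have "ed (p@a#drop (Suc j0) ystar) ystar \<le> m + 1" using split[of "drop (Suc j0) ystar" j0] j0 by simp
    then show ?thesis using dl by blast
  next
    case False
    then have "j0 = ?n" using j0 by simp
    then have "ed (p@[a]) ystar \<le> m + 1" using split[of "[]" j0] j0 by simp
    then show ?thesis by (intro bexI[of _ "[]"]) auto
  qed
  have Q: "Qstar \<Sigma> ystar p a = (if C then - int m else - int m - 1)"
    unfolding Qstar_def lev_ed
  proof (rule Greatest_equality)
    show "\<exists>s\<in>lists \<Sigma>. (if C then - int m else - int m - 1) = - int (ed (p @ a # s) ystar)"
    proof (cases C)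
      case True
      then obtain s where "s \<in> lists \<Sigma>" "ed (p@a#s) ystar \<le> m" using up1 by blast
      moreover have "m \<le> ed (p@a#s) ystar" by (rule low)
      ultimately show ?thesis using True by (intro bexI[of _ s]) auto
    next
      case False
      obtain s where "s \<in> lists \<Sigma>" "ed (p@a#s) ystar \<le> m + 1" using up2 by blast
      moreover have "m + 1 \<le> ed (p@a#s) ystar" using low2 False by blast
      ultimately show ?thesis using False by (intro bexI[of _ s]) auto
    qed
  next
    fix q assume "\<exists>s\<in>lists \<Sigma>. q = - int (ed (p @ a # s) ystar)"
    then obtain s where "q = - int (ed (p @ a # s) ystar)" by blast
    then show "q \<le> (if C then - int m else - int m - 1)"
      using low[of s] low2[of s] by (cases C) auto
  qed
  have "m \<le> lev p ystar" using hm1[of ?n] by (simp add: lev_ed)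
  moreover have "C = (\<exists>j < ?n. lev p (take j ystar) = mval p ystar \<and> ystar ! j = a)"
    unfolding C_def m_def lev_ed ..
  ultimately show ?thesis using Q unfolding m_def by auto
qed

end
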